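(* Let $G$ be a graph, $q\in\mathcal Q(G)$, $F$ a graph with $F\to G$, and let $T_n$ ($n\ge1$) be the graphs defined below. Then \[ \lim_{n\to\infty}\log_n\hom(F,T_n)=\max_{\varphi\in\mathsf{Hom}(F,G)}\sum_{A\subseteq V_G} q(A)\cdot\mathsf{CC}\big(F|_{\varphi^{-1}(A)}\big). \]
   Context: Graphs are finite directed graphs $G=(V_G,E_G)$ with $V_G$ nonempty finite and $E_G\subseteq V_G\times V_G$. Homomorphisms are vertex maps sending edges to edges; $\mathsf{Hom}(F,G)$ is their set, $\hom$ its size, $F\to G$ means $\hom(F,G)\ge 1$. $F|_B$ is the induced subgraph on $B$ and $\mathsf{CC}$ the number of connected components ignoring directions, with $\mathsf{CC}(F|_\emptyset)=0$. $\mathcal Q(G)$ is the set of $q:\wp(V_G)\to\mathbb R$ with $q(\emptyset)=0$, $q\ge0$, and $\sum_{A\subseteq V_G}q(A)\,\mathsf{CC}(G|_A)=1$. For $q\in\mathcal Q(G)$ and $n\ge1$, $T_n$ is the graph whose vertices are pairs $(x,i)$ with $x\in V_G$ and $i:\{A\subseteq V_G:x\in A\}\to\{0,1,2,\dots\}$ with $i(A)<n^{q(A)}$, and with an edge from $(x,i)$ to $(y,j)$ iff $(x,y)\in E_G$ and $i(A)=j(A)$ for every $A$ with $\{x,y\}\subseteq A\subseteq V_G$. *)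

theory Defs
  imports Complex_Main "HOL-Library.FuncSet"
begin

type_synonym 'a graph = "'a set \<times> ('a \<times> 'a) set"

definition verts :: "'a graph \<Rightarrow> 'a set" where "verts G = fst G"
definition edges :: "'a graph \<Rightarrow> ('a \<times> 'a) set" where "edges G = snd G"

definition is_graph :: "'a graph \<Rightarrow> bool" where
  "is_graph G \<longleftrightarrow> finite (verts G) \<and> verts G \<noteq> {} \<and> edges G \<subseteq> verts G \<times> verts G"

definition Hom :: "'a graph \<Rightarrow> 'b graph \<Rightarrow> ('a \<Rightarrow> 'b) set" where
  "Hom F G = {\<phi> \<in> verts F \<rightarrow>\<^sub>E verts G. \<forall>(u,v)\<in>edges F. (\<phi> u, \<phi> v) \<in> edges G}"

definition hom :: "'a graph \<Rightarrow> 'b graph \<Rightarrow> nat" where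
  "hom F G = card (Hom F G)"

definition maps_to :: "'a graph \<Rightarrow> 'b graph \<Rightarrow> bool" (infix "\<rightarrow>\<^sub>G" 50) where
  "F \<rightarrow>\<^sub>G G \<longleftrightarrow> hom F G \<ge> 1"

definition induced :: "'a graph \<Rightarrow> 'a set \<Rightarrow> 'a graph" where
  "induced F B = (B, edges F \<inter> (B \<times> B))"

definition CC :: "'a graph \<Rightarrow> nat" where
  "CC H = card (verts H // ((edges H \<union> (edges H)\<inverse>)\<^sup>*))"

definition Qset :: "'b graph \<Rightarrow> ('b set \<Rightarrow> real) set" where
  "Qset G = {q. q {} = 0 \<and> (\<forall>A \<subseteq> verts G. q A \<ge> 0) \<and>
               (\<Sum>A \<in> Pow (verts G). q A * real (CC (induced G A))) = 1}"

text \<open>The graph T_n. The index function i is represented by a total function that is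
  0 outside its domain {A \<subseteq> V_G. x \<in> A}.\<close>
definition Tn :: "'b graph \<Rightarrow> ('b set \<Rightarrow> real) \<Rightarrow> nat \<Rightarrow> ('b \<times> ('b set \<Rightarrow> nat)) graph" where
  "Tn G q n =
    ({(x, i). x \<in> verts G \<and>
        (\<forall>A. (A \<subseteq> verts G \<and> x \<in> A) \<longrightarrow> real (i A) < real n powr q A) \<and>
        (\<forall>A. \<not> (A \<subseteq> verts G \<and> x \<in> A) \<longrightarrow> i A = 0)},
     {((x, i), (y, j)). (x, y) \<in> edges G \<and>
        (\<forall>A. (A \<subseteq> verts G \<and> x \<in> A) \<longrightarrow> real (i A) < real n powr q A) \<and>
        (\<forall>A. \<not> (A \<subseteq> verts G \<and> x \<in> A) \<longrightarrow> i A = 0) \<and>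
        (\<forall>A. (A \<subseteq> verts G \<and> y \<in> A) \<longrightarrow> real (j A) < real n powr q A) \<and>
        (\<forall>A. \<not> (A \<subseteq> verts G \<and> y \<in> A) \<longrightarrow> j A = 0) \<and>
        (\<forall>A. {x, y} \<subseteq> A \<and> A \<subseteq> verts G \<longrightarrow> i A = j A)})"

end

theory Submission imports Defs begin

definition KK :: "('b set \<Rightarrow> real) \<Rightarrow> nat \<Rightarrow> 'b set \<Rightarrow> nat set" where
  "KK q n A = {k. real k < real n powr q A}"
definition BB :: "'a graph \<Rightarrow> ('a \<Rightarrow> 'b) \<Rightarrow> 'b set \<Rightarrow> 'a set" where
  "BB F \<phi> A = {v \<in> verts F. \<phi> v \<in> A}"
definition RR :: "'a graph \<Rightarrow> 'a set \<Rightarrow> ('a \<times> 'a) set" where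
  "RR F B = (edges (induced F B) \<union> (edges (induced F B))\<inverse>)\<^sup>*"
definition cls :: "'a graph \<Rightarrow> ('a \<Rightarrow> 'b) \<Rightarrow> 'b set \<Rightarrow> 'a set set" where
  "cls F \<phi> A = BB F \<phi> A // RR F (BB F \<phi> A)"
definition PP :: "'a graph \<Rightarrow> 'b graph \<Rightarrow> ('b set \<Rightarrow> real) \<Rightarrow> nat \<Rightarrow> ('a \<Rightarrow> 'b) \<Rightarrow> ('b set \<Rightarrow> 'a set \<Rightarrow> nat) set" where
  "PP F G q n \<phi> = (\<Pi>\<^sub>E A \<in> Pow (verts G). cls F \<phi> A \<rightarrow>\<^sub>E KK q n A)"
definition lift :: "'a graph \<Rightarrow> 'b graph \<Rightarrow> ('a \<Rightarrow> 'b) \<Rightarrow> ('b set \<Rightarrow> 'a set \<Rightarrow> nat) \<Rightarrow> 'a \<Rightarrow> ('b \<times> ('b set \<Rightarrow> nat))" where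
  "lift F G \<phi> g = (\<lambda>v\<in>verts F. (\<phi> v, \<lambda>A. if A \<subseteq> verts G \<and> \<phi> v \<in> A then g A (RR F (BB F \<phi> A) `` {v}) else 0))"
definition phiof :: "'a graph \<Rightarrow> ('a \<Rightarrow> ('b \<times> ('b set \<Rightarrow> nat))) \<Rightarrow> 'a \<Rightarrow> 'b" where
  "phiof F \<psi> = restrict (fst \<circ> \<psi>) (verts F)"
definition gof :: "'a graph \<Rightarrow> 'b graph \<Rightarrow> ('a \<Rightarrow> ('b \<times> ('b set \<Rightarrow> nat))) \<Rightarrow> 'b set \<Rightarrow> 'a set \<Rightarrow> nat" where
  "gof F G \<psi> = (\<lambda>A\<in>Pow (verts G). \<lambda>c\<in>cls F (phiof F \<psi>) A. snd (\<psi> (SOME v. v \<in> c)) A)"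

lemma RR_sym: "(x,y) \<in> RR F B \<Longrightarrow> (y,x) \<in> RR F B"
proof -
  have "sym (edges (induced F B) \<union> (edges (induced F B))\<inverse>)" by (auto simp: sym_def)
  then have "sym (RR F B)" unfolding RR_def by (rule sym_rtrancl)
  then show "(x,y) \<in> RR F B \<Longrightarrow> (y,x) \<in> RR F B" by (auto dest: symD)
qed

lemma RR_trans: "(x,y) \<in> RR F B \<Longrightarrow> (y,z) \<in> RR F B \<Longrightarrow> (x,z) \<in> RR F B"
  unfolding RR_def by (rule rtrancl_trans)

lemma RR_refl: "(x,x) \<in> RR F B"
  unfolding RR_def by simp

lemma RR_in: "(x,y) \<in> RR F B \<Longrightarrow> x \<in> B \<Longrightarrow> y \<in> B"
  unfolding RR_def
  by (induction rule: rtrancl_induct) (auto simp: induced_def edges_def)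

lemma RR_edge: "(u,v) \<in> edges F \<Longrightarrow> u \<in> B \<Longrightarrow> v \<in> B \<Longrightarrow> (u,v) \<in> RR F B"
  unfolding RR_def by (rule r_into_rtrancl) (auto simp: induced_def edges_def)

lemma cls_eq: "c \<in> B // RR F B \<Longrightarrow> v \<in> c \<Longrightarrow> RR F B `` {v} = c"
  unfolding quotient_def
  by (auto intro: RR_trans RR_sym)

lemma cls_sub: "c \<in> B // RR F B \<Longrightarrow> v \<in> c \<Longrightarrow> v \<in> B"
  unfolding quotient_def
  by (auto intro: RR_in)

lemma cls_ne: "c \<in> B // RR F B \<Longrightarrow> \<exists>v. v \<in> c"
  unfolding quotient_def
  by (auto intro: RR_refl)

lemma cls_mem: "v \<in> B \<Longrightarrow> RR F B `` {v} \<in> B // RR F B"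
  by (rule quotientI)

lemma CC_eq: "CC (induced F B) = card (B // RR F B)"
  by (simp add: CC_def RR_def verts_def induced_def)

lemma lift_Hom:
  assumes F: "is_graph F" and \<phi>: "\<phi> \<in> Hom F G" and g: "g \<in> PP F G q n \<phi>"
  shows "lift F G \<phi> g \<in> Hom F (Tn G q n)"
proof -
  have gv: "g A (RR F (BB F \<phi> A) `` {v}) \<in> KK q n A" if "A \<subseteq> verts G" "v \<in> verts F" "\<phi> v \<in> A" for A v
  proof -
    have "v \<in> BB F \<phi> A" using that by (simp add: BB_def)
    then have "RR F (BB F \<phi> A) `` {v} \<in> cls F \<phi> A" unfolding cls_def by (rule cls_mem)
    then show ?thesis using g that unfolding PP_def by (auto simp: PiE_iff)
  qed
  have phiW: "\<phi> v \<in> verts G" if "v \<in> verts F" for v using \<phi> that by (auto simp: Hom_def)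
  have vert: "lift F G \<phi> g v \<in> verts (Tn G q n)" if "v \<in> verts F" for v
    using that gv phiW by (auto simp: lift_def Tn_def verts_def KK_def)
  have EF: "edges F \<subseteq> verts F \<times> verts F" using F by (simp add: is_graph_def)
  show ?thesis unfolding Hom_def
  proof (intro CollectI conjI ballI)
    show "lift F G \<phi> g \<in> verts F \<rightarrow>\<^sub>E verts (Tn G q n)"
      using vert by (auto simp: lift_def)
  next
    fix e assume e: "e \<in> edges F"
    obtain u v where uv: "e = (u,v)" by (cases e)
    have u: "u \<in> verts F" and v: "v \<in> verts F" using e EF uv by auto
    have eG: "(\<phi> u, \<phi> v) \<in> edges G" using \<phi> e uv by (auto simp: Hom_def)
    have same: "RR F (BB F \<phi> A) `` {u} = RR F (BB F \<phi> A) `` {v}"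
      if "\<phi> u \<in> A" "\<phi> v \<in> A" for A
    proof -
      have "u \<in> BB F \<phi> A" "v \<in> BB F \<phi> A" using that u v by (auto simp: BB_def)
      then have "(u,v) \<in> RR F (BB F \<phi> A)" using e uv by (auto intro: RR_edge)
      then show ?thesis by (auto intro: RR_trans RR_sym)
    qed
    show "case e of (u, v) \<Rightarrow> (lift F G \<phi> g u, lift F G \<phi> g v) \<in> edges (Tn G q n)"
      using u v eG gv phiW same by (auto simp: uv lift_def Tn_def edges_def KK_def)
  qed
qed

lemma lift_inj:
  assumes \<phi>: "\<phi> \<in> Hom F G" and g: "g \<in> PP F G q n \<phi>"
    and \<phi>': "\<phi>' \<in> Hom F G" and g': "g' \<in> PP F G q n \<phi>'"
    and eq: "lift F G \<phi> g = lift F G \<phi>' g'"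
  shows "\<phi> = \<phi>' \<and> g = g'"
proof -
  have pv: "\<phi> v = \<phi>' v" if "v \<in> verts F" for v
    using fun_cong[OF eq, of v] that by (simp add: lift_def)
  have pp: "\<phi> = \<phi>'"
  proof (rule extensionalityI)
    show "\<phi> \<in> extensional (verts F)" "\<phi>' \<in> extensional (verts F)"
      using \<phi> \<phi>' unfolding Hom_def by (auto simp: PiE_iff)
  qed (rule pv)
  have "g = g'"
  proof (rule extensionalityI)
    show "g \<in> extensional (Pow (verts G))" "g' \<in> extensional (Pow (verts G))"
      using g g' unfolding PP_def by (simp_all add: PiE_iff)
  next
    fix A assume A: "A \<in> Pow (verts G)"
    show "g A = g' A"
    proof (rule extensionalityI)
      show "g A \<in> extensional (cls F \<phi> A)" "g' A \<in> extensional (cls F \<phi> A)"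
        using g g' A pp unfolding PP_def by (simp_all add: PiE_iff)
    next
      fix c assume c: "c \<in> cls F \<phi> A"
      obtain v where v: "v \<in> c" using cls_ne[OF c[unfolded cls_def]] by blast
      have vB: "v \<in> BB F \<phi> A" by (rule cls_sub[OF c[unfolded cls_def] v])
      have ce: "RR F (BB F \<phi> A) `` {v} = c" by (rule cls_eq[OF c[unfolded cls_def] v])
      have "snd (lift F G \<phi> g v) A = snd (lift F G \<phi>' g' v) A" using eq by simp
      then show "g A c = g' A c" using vB ce A pp by (simp add: lift_def BB_def)
    qed
  qed
  then show ?thesis using pp by simp
qed


lemma const_RR:
  assumes \<psi>: "\<psi> \<in> Hom F (Tn G q n)" and A: "A \<subseteq> verts G"
    and r: "(u,w) \<in> RR F (BB F (phiof F \<psi>) A)"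
  shows "snd (\<psi> u) A = snd (\<psi> w) A"
  using r unfolding RR_def
proof (induction rule: rtrancl_induct)
  case base then show ?case by simp
next
  case (step y z)
  have TE: "snd a A = snd b A" if "(a,b) \<in> edges (Tn G q n)" "fst a \<in> A" "fst b \<in> A" for a b
    using that A by (cases a; cases b) (simp add: Tn_def edges_def)
  have HE: "(\<psi> a, \<psi> b) \<in> edges (Tn G q n)" if "(a,b) \<in> edges F" for a b
    using \<psi> that by (auto simp: Hom_def)
  from step(2) have yz: "((y,z) \<in> edges F \<or> (z,y) \<in> edges F)" and
    yB: "y \<in> BB F (phiof F \<psi>) A" and zB: "z \<in> BB F (phiof F \<psi>) A"
    by (auto simp: induced_def edges_def)
  have "fst (\<psi> y) \<in> A" "fst (\<psi> z) \<in> A" using yB zB by (auto simp: BB_def phiof_def)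
  then have "snd (\<psi> y) A = snd (\<psi> z) A" using yz TE HE by metis
  then show ?case using step by simp
qed


lemma phiof_Hom:
  assumes F: "is_graph F" and \<psi>: "\<psi> \<in> Hom F (Tn G q n)"
  shows "phiof F \<psi> \<in> Hom F G"
proof -
  have vv: "fst (\<psi> v) \<in> verts G" if "v \<in> verts F" for v
  proof -
    have "\<psi> v \<in> verts (Tn G q n)" using \<psi> that by (auto simp: Hom_def)
    then show ?thesis by (cases "\<psi> v") (simp add: Tn_def verts_def)
  qed
  have ee: "(fst (\<psi> u), fst (\<psi> v)) \<in> edges G" if "(u,v) \<in> edges F" for u v
  proof -
    have "(\<psi> u, \<psi> v) \<in> edges (Tn G q n)" using \<psi> that by (auto simp: Hom_def)
    then show ?thesis by (cases "\<psi> u"; cases "\<psi> v") (simp add: Tn_def edges_def)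
  qed
  have EF: "edges F \<subseteq> verts F \<times> verts F" using F by (simp add: is_graph_def)
  show ?thesis unfolding Hom_def phiof_def using vv ee EF by auto
qed

lemma in_vertsTn:
  assumes "\<psi> \<in> Hom F (Tn G q n)" "v \<in> verts F"
  shows "fst (\<psi> v) \<in> verts G"
    "\<And>A. A \<subseteq> verts G \<Longrightarrow> fst (\<psi> v) \<in> A \<Longrightarrow> real (snd (\<psi> v) A) < real n powr q A"
    "\<And>A. \<not> (A \<subseteq> verts G \<and> fst (\<psi> v) \<in> A) \<Longrightarrow> snd (\<psi> v) A = 0"
proof -
  have "\<psi> v \<in> verts (Tn G q n)" using assms by (auto simp: Hom_def)
  then show "fst (\<psi> v) \<in> verts G"
    "\<And>A. A \<subseteq> verts G \<Longrightarrow> fst (\<psi> v) \<in> A \<Longrightarrow> real (snd (\<psi> v) A) < real n powr q A"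
    "\<And>A. \<not> (A \<subseteq> verts G \<and> fst (\<psi> v) \<in> A) \<Longrightarrow> snd (\<psi> v) A = 0"
    by (cases "\<psi> v"; simp add: Tn_def verts_def)+
qed

lemma gof_PP:
  assumes \<psi>: "\<psi> \<in> Hom F (Tn G q n)"
  shows "gof F G \<psi> \<in> PP F G q n (phiof F \<psi>)"
proof -
  have "snd (\<psi> (SOME v. v \<in> c)) A \<in> KK q n A"
    if A: "A \<subseteq> verts G" and c: "c \<in> cls F (phiof F \<psi>) A" for A c
  proof -
    have "\<exists>v. v \<in> c" by (rule cls_ne[OF c[unfolded cls_def]])
    then have s: "(SOME v. v \<in> c) \<in> c" by (rule someI_ex)
    have "(SOME v. v \<in> c) \<in> BB F (phiof F \<psi>) A" by (rule cls_sub[OF c[unfolded cls_def] s])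
    then have "(SOME v. v \<in> c) \<in> verts F" "fst (\<psi> (SOME v. v \<in> c)) \<in> A"
      by (auto simp: BB_def phiof_def)
    then show ?thesis using in_vertsTn(2)[OF \<psi>] A by (simp add: KK_def)
  qed
  then show ?thesis unfolding PP_def gof_def by auto
qed

lemma lift_gof:
  assumes \<psi>: "\<psi> \<in> Hom F (Tn G q n)"
  shows "lift F G (phiof F \<psi>) (gof F G \<psi>) = \<psi>"
proof (rule extensionalityI)
  show "lift F G (phiof F \<psi>) (gof F G \<psi>) \<in> extensional (verts F)"
    by (simp add: lift_def)
  show "\<psi> \<in> extensional (verts F)" using \<psi> by (simp add: Hom_def PiE_iff)
next
  fix v assume v: "v \<in> verts F"
  let ?\<phi> = "phiof F \<psi>"
  have "snd (lift F G ?\<phi> (gof F G \<psi>) v) A = snd (\<psi> v) A" for A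
  proof (cases "A \<subseteq> verts G \<and> fst (\<psi> v) \<in> A")
    case True
    let ?c = "RR F (BB F ?\<phi> A) `` {v}"
    have vB: "v \<in> BB F ?\<phi> A" using v True by (simp add: BB_def phiof_def)
    have c: "?c \<in> cls F ?\<phi> A" unfolding cls_def by (rule cls_mem[OF vB])
    have "\<exists>w. w \<in> ?c" by (rule cls_ne[OF c[unfolded cls_def]])
    then have s: "(SOME w. w \<in> ?c) \<in> ?c" by (rule someI_ex)
    then have "(v, SOME w. w \<in> ?c) \<in> RR F (BB F ?\<phi> A)" by simp
    then have eq: "snd (\<psi> v) A = snd (\<psi> (SOME w. w \<in> ?c)) A"
      by (rule const_RR[OF \<psi> conjunct1[OF True]])
    have "snd (lift F G ?\<phi> (gof F G \<psi>) v) A = gof F G \<psi> A ?c"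
      using v True by (simp add: lift_def phiof_def)
    also have "\<dots> = snd (\<psi> (SOME w. w \<in> ?c)) A"
      using True c by (simp add: gof_def)
    finally show ?thesis using eq by simp
  next
    case False
    then show ?thesis using v in_vertsTn(3)[OF \<psi> v False] by (auto simp: lift_def phiof_def)
  qed
  moreover have "fst (lift F G ?\<phi> (gof F G \<psi>) v) = fst (\<psi> v)"
    using v by (simp add: lift_def phiof_def)
  ultimately show "lift F G ?\<phi> (gof F G \<psi>) v = \<psi> v" by (simp add: prod_eq_iff fun_eq_iff)
qed


lemma KK_eq: "KK q n A = {..< nat \<lceil>real n powr q A\<rceil>}"
proof -
  have "real k < x \<longleftrightarrow> k < nat \<lceil>x\<rceil>" for k and x :: real
  proof -
    have "real k < x \<longleftrightarrow> of_int (int k) < x" by simp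
    also have "\<dots> \<longleftrightarrow> int k < \<lceil>x\<rceil>" by (rule less_ceiling_iff[symmetric])
    also have "\<dots> \<longleftrightarrow> k < nat \<lceil>x\<rceil>" by linarith
    finally show ?thesis .
  qed
  then show ?thesis by (auto simp: KK_def)
qed

lemma finite_cls: "finite (verts F) \<Longrightarrow> finite (cls F \<phi> A)"
  unfolding cls_def quotient_def BB_def by auto

lemma finite_Hom: "is_graph F \<Longrightarrow> is_graph G \<Longrightarrow> finite (Hom F G)"
proof -
  assume "is_graph F" "is_graph G"
  then have "finite (verts F \<rightarrow>\<^sub>E verts G)" by (simp add: is_graph_def finite_PiE)
  then show ?thesis by (rule rev_finite_subset) (auto simp: Hom_def)
qed

lemma card_PP:
  assumes F: "is_graph F" and G: "is_graph G"
  shows "finite (PP F G q n \<phi>) \<and> card (PP F G q n \<phi>) =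
     (\<Prod>A\<in>Pow (verts G). (nat \<lceil>real n powr q A\<rceil>) ^ CC (induced F (BB F \<phi> A)))"
proof -
  have fW: "finite (Pow (verts G))" using G by (simp add: is_graph_def)
  have fV: "finite (verts F)" using F by (simp add: is_graph_def)
  have fK: "finite (KK q n A)" for A unfolding KK_eq by simp
  have "finite (PP F G q n \<phi>)" unfolding PP_def
    by (intro finite_PiE fW) (simp_all add: finite_cls[OF fV] fK)
  moreover have "card (PP F G q n \<phi>) =
     (\<Prod>A\<in>Pow (verts G). (nat \<lceil>real n powr q A\<rceil>) ^ CC (induced F (BB F \<phi> A)))"
    unfolding PP_def card_PiE[OF fW]
    by (intro prod.cong refl) (simp add: card_funcsetE finite_cls[OF fV, unfolded cls_def] KK_eq CC_eq cls_def)
  ultimately show ?thesis by simp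
qed

lemma hom_Tn:
  assumes F: "is_graph F" and G: "is_graph G"
  shows "hom F (Tn G q n) = (\<Sum>\<phi>\<in>Hom F G. card (PP F G q n \<phi>))"
proof -
  let ?S = "Sigma (Hom F G) (PP F G q n)"
  let ?L = "\<lambda>(\<phi>, g). lift F G \<phi> g"
  have inj: "inj_on ?L ?S"
  proof (rule inj_onI)
    fix x y assume xy: "x \<in> ?S" "y \<in> ?S" "?L x = ?L y"
    obtain a b where x: "x = (a, b)" by (cases x)
    obtain c d where y: "y = (c, d)" by (cases y)
    have "a \<in> Hom F G" "b \<in> PP F G q n a" "c \<in> Hom F G" "d \<in> PP F G q n c"
      "lift F G a b = lift F G c d" using xy x y by auto
    then have "a = c \<and> b = d" by (rule lift_inj)
    then show "x = y" using x y by simp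
  qed
  have img: "?L ` ?S = Hom F (Tn G q n)"
  proof
    show "?L ` ?S \<subseteq> Hom F (Tn G q n)" by (auto intro: lift_Hom[OF F])
    show "Hom F (Tn G q n) \<subseteq> ?L ` ?S"
    proof
      fix \<psi> assume \<psi>: "\<psi> \<in> Hom F (Tn G q n)"
      have "(phiof F \<psi>, gof F G \<psi>) \<in> ?S"
        using phiof_Hom[OF F \<psi>] gof_PP[OF \<psi>] by simp
      moreover have "?L (phiof F \<psi>, gof F G \<psi>) = \<psi>" using lift_gof[OF \<psi>] by simp
      ultimately show "\<psi> \<in> ?L ` ?S" by (metis image_eqI)
    qed
  qed
  have "hom F (Tn G q n) = card ?S" unfolding hom_def img[symmetric] by (rule card_image[OF inj])
  also have "\<dots> = (\<Sum>\<phi>\<in>Hom F G. card (PP F G q n \<phi>))"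
    using finite_Hom[OF F G] card_PP[OF F G] by (simp add: card_SigmaI)
  finally show ?thesis .
qed


definition sv :: "'a graph \<Rightarrow> 'b graph \<Rightarrow> ('b set \<Rightarrow> real) \<Rightarrow> ('a \<Rightarrow> 'b) \<Rightarrow> real" where
  "sv F G q \<phi> = (\<Sum>A \<in> Pow (verts G). q A * real (CC (induced F {v \<in> verts F. \<phi> v \<in> A})))"
definition Kv :: "'a graph \<Rightarrow> 'b graph \<Rightarrow> ('a \<Rightarrow> 'b) \<Rightarrow> nat" where
  "Kv F G \<phi> = (\<Sum>A \<in> Pow (verts G). CC (induced F {v \<in> verts F. \<phi> v \<in> A}))"

lemma ceil_bounds:
  assumes "x \<ge> (1::real)"
  shows "x \<le> real (nat \<lceil>x\<rceil>)" "real (nat \<lceil>x\<rceil>) \<le> 2 * x"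
proof -
  have "real (nat \<lceil>x\<rceil>) = of_int \<lceil>x\<rceil>" using assms by simp
  moreover have "x \<le> of_int \<lceil>x\<rceil>" "of_int \<lceil>x\<rceil> - 1 < x" using ceiling_correct by auto
  ultimately show "x \<le> real (nat \<lceil>x\<rceil>)" "real (nat \<lceil>x\<rceil>) \<le> 2 * x" using assms by linarith+
qed

lemma PP_bounds:
  assumes F: "is_graph F" and G: "is_graph G" and q: "q \<in> Qset G" and n: "real n \<ge> 1"
  shows "real n powr sv F G q \<phi> \<le> real (card (PP F G q n \<phi>))"
    "real (card (PP F G q n \<phi>)) \<le> 2 ^ Kv F G \<phi> * real n powr sv F G q \<phi>"
proof -
  let ?k = "\<lambda>A. CC (induced F (BB F \<phi> A))"
  let ?x = "\<lambda>A. real n powr q A"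
  have qA: "q A \<ge> 0" if "A \<in> Pow (verts G)" for A using q that by (auto simp: Qset_def)
  have x1: "?x A \<ge> 1" if "A \<in> Pow (verts G)" for A using qA[OF that] n by (simp add: ge_one_powr_ge_zero)
  have cardeq: "real (card (PP F G q n \<phi>)) = (\<Prod>A\<in>Pow (verts G). real (nat \<lceil>?x A\<rceil>) ^ ?k A)"
    using card_PP[OF F G, of q n \<phi>] by simp
  have "real n powr sv F G q \<phi> = (\<Prod>A\<in>Pow (verts G). real n powr (q A * real (?k A)))"
    unfolding sv_def BB_def by (rule powr_sum) (use n in simp)
  also have "\<dots> = (\<Prod>A\<in>Pow (verts G). ?x A ^ ?k A)"
    using n by (intro prod.cong refl) (simp add: powr_power mult.commute)
  finally have pe: "real n powr sv F G q \<phi> = (\<Prod>A\<in>Pow (verts G). ?x A ^ ?k A)" .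
  show "real n powr sv F G q \<phi> \<le> real (card (PP F G q n \<phi>))"
    unfolding pe cardeq
    by (intro prod_mono conjI power_mono) (use x1 ceil_bounds in auto)
  have "0 \<le> real (nat \<lceil>?x A\<rceil>) ^ ?k A \<and> real (nat \<lceil>?x A\<rceil>) ^ ?k A \<le> (2 * ?x A) ^ ?k A"
    if "A \<in> Pow (verts G)" for A
    using ceil_bounds(2)[OF x1[OF that]] by (intro conjI power_mono zero_le_power of_nat_0_le_iff) auto
  then have "real (card (PP F G q n \<phi>)) \<le> (\<Prod>A\<in>Pow (verts G). (2 * ?x A) ^ ?k A)"
    unfolding cardeq by (rule prod_mono)
  also have "\<dots> = (\<Prod>A\<in>Pow (verts G). 2 ^ ?k A) * (\<Prod>A\<in>Pow (verts G). ?x A ^ ?k A)"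
    by (simp add: power_mult_distrib prod.distrib)
  also have "(\<Prod>A\<in>Pow (verts G). (2::real) ^ ?k A) = 2 ^ Kv F G \<phi>"
    unfolding Kv_def BB_def by (simp add: power_sum)
  finally show "real (card (PP F G q n \<phi>)) \<le> 2 ^ Kv F G \<phi> * real n powr sv F G q \<phi>"
    unfolding pe .
qed


theorem corollary6p2:
  fixes F :: "'a graph" and G :: "'b graph" and q :: "'b set \<Rightarrow> real"
  assumes "is_graph F" and "is_graph G" and "q \<in> Qset G" and "F \<rightarrow>\<^sub>G G"
  shows "(\<lambda>n. log (real n) (real (hom F (Tn G q n))))
           \<longlonglongrightarrow> Max ((\<lambda>\<phi>. \<Sum>A \<in> Pow (verts G).
                     q A * real (CC (induced F {v \<in> verts F. \<phi> v \<in> A}))) ` Hom F G)"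
proof -
  note F = assms(1) and G = assms(2) and q = assms(3)
  have sv_eq: "(\<lambda>\<phi>. \<Sum>A \<in> Pow (verts G). q A * real (CC (induced F {v \<in> verts F. \<phi> v \<in> A}))) = sv F G q"
    by (simp add: sv_def fun_eq_iff)
  define S where "S = Max (sv F G q ` Hom F G)"
  define D where "D = (\<Sum>\<phi>\<in>Hom F G. (2::real) ^ Kv F G \<phi>)"
  have fH: "finite (Hom F G)" by (rule finite_Hom[OF F G])
  have neH: "Hom F G \<noteq> {}" using assms(4) by (auto simp: maps_to_def hom_def)
  have "S \<in> sv F G q ` Hom F G" unfolding S_def using fH neH by (intro Max_in) auto
  then obtain \<phi>0 where \<phi>0: "\<phi>0 \<in> Hom F G" "sv F G q \<phi>0 = S" by auto
  have svle: "sv F G q \<phi> \<le> S" if "\<phi> \<in> Hom F G" for \<phi>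
    unfolding S_def using fH that by (intro Max_ge) auto
  have D1: "D \<ge> 1"
  proof -
    have "(2::real) ^ Kv F G \<phi>0 \<le> D" unfolding D_def
      by (rule member_le_sum) (use \<phi>0 fH in auto)
    moreover have "(1::real) \<le> 2 ^ Kv F G \<phi>0" by simp
    ultimately show ?thesis by linarith
  qed
  have bounds: "real n powr S \<le> real (hom F (Tn G q n)) \<and> real (hom F (Tn G q n)) \<le> D * real n powr S"
    if n: "real n \<ge> 1" for n
  proof
    have h: "real (hom F (Tn G q n)) = (\<Sum>\<phi>\<in>Hom F G. real (card (PP F G q n \<phi>)))"
      using hom_Tn[OF F G] by simp
    have "real n powr S \<le> real (card (PP F G q n \<phi>0))"
      using PP_bounds(1)[OF F G q n, of \<phi>0] \<phi>0 by simp
    also have "\<dots> \<le> (\<Sum>\<phi>\<in>Hom F G. real (card (PP F G q n \<phi>)))"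
      by (rule member_le_sum) (use \<phi>0 fH in auto)
    finally show "real n powr S \<le> real (hom F (Tn G q n))" using h by simp
    have "(\<Sum>\<phi>\<in>Hom F G. real (card (PP F G q n \<phi>))) \<le> (\<Sum>\<phi>\<in>Hom F G. 2 ^ Kv F G \<phi> * real n powr S)"
    proof (rule sum_mono)
      fix \<phi> assume "\<phi> \<in> Hom F G"
      then have "real n powr sv F G q \<phi> \<le> real n powr S" using svle n by (intro powr_mono) auto
      then have "2 ^ Kv F G \<phi> * real n powr sv F G q \<phi> \<le> 2 ^ Kv F G \<phi> * real n powr S"
        by (intro mult_left_mono) auto
      then show "real (card (PP F G q n \<phi>)) \<le> 2 ^ Kv F G \<phi> * real n powr S"
        using PP_bounds(2)[OF F G q n, of \<phi>] by linarith
    qed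
    also have "\<dots> = D * real n powr S" unfolding D_def by (simp add: sum_distrib_right)
    finally show "real (hom F (Tn G q n)) \<le> D * real n powr S" using h by simp
  qed
  have lo: "eventually (\<lambda>n. S \<le> log (real n) (real (hom F (Tn G q n)))) sequentially"
    using eventually_ge_at_top[of 2]
  proof eventually_elim
    case (elim n)
    then have n: "real n \<ge> 2" by simp
    have pos: "0 < real n powr S" using n by simp
    have hpos: "0 < real (hom F (Tn G q n))" using pos bounds[of n] n by linarith
    have "S = log (real n) (real n powr S)" using n by simp
    also have "\<dots> \<le> log (real n) (real (hom F (Tn G q n)))"
      using bounds[of n] n pos hpos by (subst log_le_cancel_iff) auto
    finally show ?case .
  qed
  have hi: "eventually (\<lambda>n. log (real n) (real (hom F (Tn G q n))) \<le> S + ln D / ln (real n)) sequentially"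
    using eventually_ge_at_top[of 2]
  proof eventually_elim
    case (elim n)
    then have n: "real n \<ge> 2" by simp
    have pos: "0 < real n powr S" using n by simp
    have hpos: "0 < real (hom F (Tn G q n))" using pos bounds[of n] n by linarith
    have "log (real n) (real (hom F (Tn G q n))) \<le> log (real n) (D * real n powr S)"
      using bounds[of n] n D1 pos hpos by (subst log_le_cancel_iff) auto
    also have "\<dots> = log (real n) D + S" using n D1 by (simp add: log_mult)
    also have "\<dots> = S + ln D / ln (real n)" by (simp add: log_def)
    finally show ?case .
  qed
  have lnlim: "filterlim (\<lambda>n. ln (real n)) at_infinity sequentially"
    by (rule filterlim_at_top_imp_at_infinity,
        rule filterlim_compose[OF ln_at_top filterlim_real_sequentially])
  have "(\<lambda>n. S + ln D / ln (real n)) \<longlonglongrightarrow> S + 0"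
    by (intro tendsto_add tendsto_const tendsto_divide_0[OF tendsto_const lnlim])
  then have "(\<lambda>n. S + ln D / ln (real n)) \<longlonglongrightarrow> S" by simp
  then have "(\<lambda>n. log (real n) (real (hom F (Tn G q n)))) \<longlonglongrightarrow> S"
    by (rule tendsto_sandwich[OF lo hi tendsto_const])
  then show ?thesis unfolding sv_eq S_def .
qed


end
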